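(* Let $\mathcal{G}=(V,E)$ be a DAG with $V=[n]$, and let $i,j\in V$ be distinct and $K\subseteq V\setminus\{i,j\}$ such that $K$ does not $d$-separate $i$ from $j$ in $\mathcal{G}$. Let $\phi_\mathcal{G}^\ast(\det\Sigma_{\{i\}\cup K,\{j\}\cup K})=\prod_{\ell=1}^m f_\ell$ be a factorization into irreducible polynomials $f_\ell\in\mathbb{R}[\lambda,\omega]$, and let $\mathcal{V}(f_\ell)$ denote the zero set of $f_\ell$ in the parameter space $\mathbb{R}^E\times\mathbb{R}^n$. Then \[ \mathcal{M}_{\mathcal{G},i\perp\!\!\!\perp j|K}=\bigcup_{\ell=1}^m \phi_\mathcal{G}(\mathcal{V}(f_\ell))\cap \mathrm{PD}_n . \]
   Context: For a DAG $\mathcal{G}=(V,E)$ on $V=[n]$, let $\Lambda=(\lambda_{ij})$ be an $n\times n$ matrix with $\lambda_{ij}$ a free parameter if $i\to j\in E$ and $\lambda_{ij}=0$ otherwise, and $\Omega=\mathrm{diag}(\omega_1,\dots,\omega_n)$. The map $\phi_\mathcal{G}(\Lambda,\Omega)=(I-\Lambda)^{-T}\Omega(I-\Lambda)^{-1}$ is a polynomial map on $\mathbb{R}^E\times\mathbb{R}^n$ (since $\Lambda$ is nilpotent). The Gaussian DAG model is $\mathcal{M}_\mathcal{G}=\phi_\mathcal{G}(\mathbb{R}^E\times(0,\infty)^n)\subseteq\mathrm{PD}_n$, where $\mathrm{PD}_n$ is the cone of positive definite $n\times n$ matrices. $\mathbb{R}[\lambda,\omega]$ is the polynomial ring in the variables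 $\lambda_{ij}$ ($i\to j\in E$) and $\omega_1,\dots,\omega_n$, and $\phi_\mathcal{G}^\ast:\mathbb{R}[\sigma_{ab}:1\le a\le b\le n]\to\mathbb{R}[\lambda,\omega]$ is the ring homomorphism sending $\sigma_{ab}$ to the $(a,b)$ entry of $(I-\Lambda)^{-T}\Omega(I-\Lambda)^{-1}$. For a symmetric matrix $\Sigma$ and sets $A,B$, $\Sigma_{A,B}$ is the submatrix with rows $A$ and columns $B$. For a Gaussian with covariance $\Sigma$, $i\perp\!\!\!\perp j\mid K$ holds iff $\det\Sigma_{\{i\}\cup K,\{j\}\cup K}=0$; $\mathcal{M}_{i\perp\!\!\!\perp j|K}$ is the set of $\Sigma\in\mathrm{PD}_n$ with this property, and $\mathcal{M}_{\mathcal{G},i\perp\!\!\!\perp j|K}=\mathcal{M}_\mathcal{G}\cap\mathcal{M}_{i\perp\!\!\!\perp j|K}$. $d$-separation: $C$ $d$-separates $a$ and $b$ in $\mathcal{G}$ if every path between them contains a non-collider in $C$ or a collider which is not in $C$ and has no descendant in $C$ (a collider on a path is a node $k$ with consecutive edges $u\to k\leftarrow w$). *)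

theory Defs
  imports "HOL-Library.Poly_Mapping"
    "Jordan_Normal_Form.Determinant"
    "Jordan_Normal_Form.Gauss_Jordan_Elimination"
    "Jordan_Normal_Form.DL_Submatrix"
begin

definition is_dag :: "nat \<Rightarrow> (nat \<times> nat) set \<Rightarrow> bool" where
  "is_dag n E \<longleftrightarrow> E \<subseteq> {0..<n} \<times> {0..<n} \<and> acyclic E"

definition is_path :: "(nat \<times> nat) set \<Rightarrow> nat \<Rightarrow> nat \<Rightarrow> nat list \<Rightarrow> bool" where
  "is_path E a b ps \<longleftrightarrow> ps \<noteq> [] \<and> hd ps = a \<and> last ps = b \<and> distinct ps \<and>
     (\<forall>k. Suc k < length ps \<longrightarrow> (ps ! k, ps ! Suc k) \<in> E \<or> (ps ! Suc k, ps ! k) \<in> E)"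

definition collider_at :: "(nat \<times> nat) set \<Rightarrow> nat list \<Rightarrow> nat \<Rightarrow> bool" where
  "collider_at E ps k \<longleftrightarrow> 0 < k \<and> Suc k < length ps \<and>
     (ps ! (k - 1), ps ! k) \<in> E \<and> (ps ! Suc k, ps ! k) \<in> E"

definition path_blocked :: "(nat \<times> nat) set \<Rightarrow> nat set \<Rightarrow> nat list \<Rightarrow> bool" where
  "path_blocked E C ps \<longleftrightarrow> (\<exists>k. 0 < k \<and> Suc k < length ps \<and>
     ((\<not> collider_at E ps k \<and> ps ! k \<in> C) \<or>
      (collider_at E ps k \<and> ps ! k \<notin> C \<and> (\<forall>c\<in>C. (ps ! k, c) \<notin> E\<^sup>+))))"

definition d_separates :: "(nat \<times> nat) set \<Rightarrow> nat set \<Rightarrow> nat \<Rightarrow> nat \<Rightarrow> bool" where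
  "d_separates E C a b \<longleftrightarrow> (\<forall>ps. is_path E a b ps \<longrightarrow> path_blocked E C ps)"

datatype pvar = Lam nat nat | Om nat

type_synonym rpoly = "(pvar \<Rightarrow>\<^sub>0 nat) \<Rightarrow>\<^sub>0 real"

definition Var :: "pvar \<Rightarrow> rpoly" where
  "Var v = Poly_Mapping.single (Poly_Mapping.single v 1) 1"

definition peval :: "rpoly \<Rightarrow> (pvar \<Rightarrow> real) \<Rightarrow> real" where
  "peval p x = (\<Sum>m\<in>Poly_Mapping.keys p. Poly_Mapping.lookup p m * (\<Prod>v\<in>Poly_Mapping.keys m. x v ^ Poly_Mapping.lookup m v))"

definition param_vars :: "nat \<Rightarrow> (nat \<times> nat) set \<Rightarrow> pvar set" where
  "param_vars n E = {Lam a b | a b. (a, b) \<in> E} \<union> {Om a | a. a < n}"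

definition param_ring :: "nat \<Rightarrow> (nat \<times> nat) set \<Rightarrow> rpoly set" where
  "param_ring n E = {p. \<forall>m\<in>Poly_Mapping.keys p. Poly_Mapping.keys m \<subseteq> param_vars n E}"

definition unit_in :: "rpoly set \<Rightarrow> rpoly \<Rightarrow> bool" where
  "unit_in R g \<longleftrightarrow> g \<in> R \<and> (\<exists>u\<in>R. g * u = 1)"

definition irreducible_in :: "rpoly set \<Rightarrow> rpoly \<Rightarrow> bool" where
  "irreducible_in R f \<longleftrightarrow> f \<in> R \<and> f \<noteq> 0 \<and> \<not> unit_in R f \<and>
     (\<forall>g\<in>R. \<forall>h\<in>R. f = g * h \<longrightarrow> unit_in R g \<or> unit_in R h)"

definition LamR :: "nat \<Rightarrow> (nat \<times> nat) set \<Rightarrow> (pvar \<Rightarrow> real) \<Rightarrow> real mat" where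
  "LamR n E x = mat n n (\<lambda>(a, b). if (a, b) \<in> E then x (Lam a b) else 0)"

definition OmR :: "nat \<Rightarrow> (pvar \<Rightarrow> real) \<Rightarrow> real mat" where
  "OmR n x = mat n n (\<lambda>(a, b). if a = b then x (Om a) else 0)"

definition phiR :: "nat \<Rightarrow> (nat \<times> nat) set \<Rightarrow> (pvar \<Rightarrow> real) \<Rightarrow> real mat" where
  "phiR n E x = (let B = the (mat_inverse (1\<^sub>m n - LamR n E x))
                 in transpose_mat B * OmR n x * B)"

definition LamS :: "nat \<Rightarrow> (nat \<times> nat) set \<Rightarrow> rpoly mat" where
  "LamS n E = mat n n (\<lambda>(a, b). if (a, b) \<in> E then Var (Lam a b) else 0)"

definition OmS :: "nat \<Rightarrow> rpoly mat" where
  "OmS n = mat n n (\<lambda>(a, b). if a = b then Var (Om a) else 0)"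

text \<open>(I - Lambda)^{-1} over the polynomial ring = sum_{k<n} Lambda^k (Lambda nilpotent).\<close>
fun neumann :: "nat \<Rightarrow> rpoly mat \<Rightarrow> nat \<Rightarrow> rpoly mat" where
  "neumann n A 0 = 0\<^sub>m n n"
| "neumann n A (Suc k) = 1\<^sub>m n + A * neumann n A k"

definition SigmaS :: "nat \<Rightarrow> (nat \<times> nat) set \<Rightarrow> rpoly mat" where
  "SigmaS n E = (let B = neumann n (LamS n E) n in transpose_mat B * OmS n * B)"

text \<open>phi_G^*(det Sigma_{{i} \<union> K, {j} \<union> K}); rows/columns in increasing order.\<close>
definition pullback_det :: "nat \<Rightarrow> (nat \<times> nat) set \<Rightarrow> nat \<Rightarrow> nat \<Rightarrow> nat set \<Rightarrow> rpoly" where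
  "pullback_det n E i j K = det (submatrix (SigmaS n E) ({i} \<union> K) ({j} \<union> K))"

definition pd_mat :: "nat \<Rightarrow> real mat \<Rightarrow> bool" where
  "pd_mat n S \<longleftrightarrow> S \<in> carrier_mat n n \<and> transpose_mat S = S \<and>
     (\<forall>v\<in>carrier_vec n. v \<noteq> 0\<^sub>v n \<longrightarrow> v \<bullet> (S *\<^sub>v v) > 0)"

definition model :: "nat \<Rightarrow> (nat \<times> nat) set \<Rightarrow> real mat set" where
  "model n E = phiR n E ` {x. \<forall>a<n. x (Om a) > 0}"

definition ci_model :: "nat \<Rightarrow> nat \<Rightarrow> nat \<Rightarrow> nat set \<Rightarrow> real mat set" where
  "ci_model n i j K = {S. pd_mat n S \<and> det (submatrix S ({i} \<union> K) ({j} \<union> K)) = 0}"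

end

theory Submission imports Defs begin

definition mon :: "(pvar \<Rightarrow>\<^sub>0 nat) \<Rightarrow> (pvar \<Rightarrow> real) \<Rightarrow> real" where
  "mon m x = (\<Prod>v\<in>Poly_Mapping.keys m. x v ^ Poly_Mapping.lookup m v)"

lemma mon_superset: "finite S \<Longrightarrow> Poly_Mapping.keys m \<subseteq> S \<Longrightarrow>
   mon m x = (\<Prod>v\<in>S. x v ^ Poly_Mapping.lookup m v)"
  unfolding mon_def by (rule prod.mono_neutral_left) (auto simp: in_keys_iff)

lemma mon_add: "mon (a + b) x = mon a x * mon b x"
proof -
  let ?S = "Poly_Mapping.keys a \<union> Poly_Mapping.keys b"
  have "mon (a+b) x = (\<Prod>v\<in>?S. x v ^ Poly_Mapping.lookup (a+b) v)"
    by (rule mon_superset) (auto simp: keys_add)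
  also have "\<dots> = (\<Prod>v\<in>?S. x v ^ Poly_Mapping.lookup a v) * (\<Prod>v\<in>?S. x v ^ Poly_Mapping.lookup b v)"
    by (simp add: lookup_add power_add prod.distrib)
  also have "\<dots> = mon a x * mon b x"
    by (simp add: mon_superset[symmetric])
  finally show ?thesis .
qed

lemma peval_mon: "peval p x = (\<Sum>m\<in>Poly_Mapping.keys p. Poly_Mapping.lookup p m * mon m x)"
  unfolding peval_def mon_def ..

lemma peval_add: "peval (p + q) x = peval p x + peval q x"
  unfolding peval_mon
  by (rule setsum_keys_plus_distrib) (auto simp: distrib_right)

lemma peval_zero[simp]: "peval 0 x = 0"
  by (simp add: peval_def)

lemma peval_single: "peval (Poly_Mapping.single m c) x = c * mon m x"
  by (cases "c = 0") (auto simp: peval_mon)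

lemma update_eq: "a \<notin> Poly_Mapping.keys f \<Longrightarrow> Poly_Mapping.update a b f = Poly_Mapping.single a b + f"
  by (rule poly_mapping_eqI) (auto simp: lookup_update lookup_add lookup_single in_keys_iff when_def)

lemma peval_mult_single: "peval (Poly_Mapping.single m c * q) x = c * mon m x * peval q x"
proof (induction q rule: update_induct)
  case const
  then show ?case by simp
next
  case (update f a b)
  then show ?case
    by (simp add: update_eq distrib_left peval_add mult_single peval_single mon_add algebra_simps)
qed

lemma peval_mult: "peval (p * q) x = peval p x * peval q x"
proof (induction p rule: update_induct)
  case const
  then show ?case by simp
next
  case (update f a b)
  then show ?case
    by (simp add: update_eq distrib_right peval_add peval_mult_single peval_single)
qed

lemma peval_one: "peval 1 x = 1"
  by (simp add: peval_mon mon_def)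

interpretation pe: comm_ring_hom "\<lambda>p. peval p x"
  by unfold_locales (auto simp: peval_add peval_mult peval_one)

lemma peval_Var[simp]: "peval (Var v) x = x v"
  by (simp add: Var_def peval_single mon_def)


fun nR :: "nat \<Rightarrow> real mat \<Rightarrow> nat \<Rightarrow> real mat" where
  "nR n A 0 = 0\<^sub>m n n"
| "nR n A (Suc k) = 1\<^sub>m n + A * nR n A k"

fun lp :: "nat \<Rightarrow> real mat \<Rightarrow> nat \<Rightarrow> real mat" where
  "lp n A 0 = 1\<^sub>m n"
| "lp n A (Suc k) = A * lp n A k"

lemma nR_carrier: "A \<in> carrier_mat n n \<Longrightarrow> nR n A k \<in> carrier_mat n n"
  by (induction k) auto

lemma lp_carrier: "A \<in> carrier_mat n n \<Longrightarrow> lp n A k \<in> carrier_mat n n"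
  by (induction k) auto

lemma neumann_carrier: "A \<in> carrier_mat n n \<Longrightarrow> neumann n A k \<in> carrier_mat n n"
  by (induction k) auto

lemma nR_key:
  assumes A: "A \<in> carrier_mat n n"
  shows "(1\<^sub>m n - A) * nR n A k = 1\<^sub>m n - lp n A k"
proof (induction k)
  case 0
  then show ?case using A by (intro eq_matI) auto
next
  case (Suc k)
  have N: "nR n A k \<in> carrier_mat n n" using nR_carrier[OF A] .
  have P: "lp n A k \<in> carrier_mat n n" using lp_carrier[OF A] .
  have IA: "1\<^sub>m n - A \<in> carrier_mat n n" using A by auto
  have "(1\<^sub>m n - A) * nR n A (Suc k) = (1\<^sub>m n - A) * 1\<^sub>m n + (1\<^sub>m n - A) * (A * nR n A k)"
    unfolding nR.simps by (rule mult_add_distrib_mat[OF IA]) (use A N in auto)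
  also have "(1\<^sub>m n - A) * (A * nR n A k) = ((1\<^sub>m n - A) * A) * nR n A k"
    using A N IA by simp
  also have "(1\<^sub>m n - A) * A = A * (1\<^sub>m n - A)"
    using A by (simp add: minus_mult_distrib_mat[OF one_carrier_mat A A] mult_minus_distrib_mat[OF A one_carrier_mat A])
  also have "(A * (1\<^sub>m n - A)) * nR n A k = A * ((1\<^sub>m n - A) * nR n A k)"
    using A N IA by simp
  also have "\<dots> = A * (1\<^sub>m n - lp n A k)" using Suc by simp
  also have "\<dots> = A - lp n A (Suc k)"
    using A P by (simp add: mult_minus_distrib_mat[OF A one_carrier_mat P])
  finally show ?case using A P IA
    by (intro eq_matI) auto
qed


lemma LamR_carrier[simp]: "LamR n E x \<in> carrier_mat n n"
  by (simp add: LamR_def)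

lemma lp_entries:
  assumes "a < n" "b < n" "lp n (LamR n E x) k $$ (a, b) \<noteq> 0"
  shows "(a, b) \<in> E ^^ k"
  using assms
proof (induction k arbitrary: a)
  case 0
  then show ?case by (auto split: if_splits)
next
  case (Suc k)
  let ?L = "LamR n E x"
  have P: "lp n ?L k \<in> carrier_mat n n" by (rule lp_carrier) simp
  have "(?L * lp n ?L k) $$ (a, b) = (\<Sum>c\<in>{0..<n}. ?L $$ (a, c) * lp n ?L k $$ (c, b))"
    using Suc.prems P by (simp add: scalar_prod_def times_mat_def LamR_def)
  with Suc.prems obtain c where c: "c < n" "?L $$ (a, c) * lp n ?L k $$ (c, b) \<noteq> 0"
    by (metis (no_types, lifting) atLeastLessThan_iff lp.simps(2) sum.neutral)
  then have "(a, c) \<in> E" using Suc.prems by (auto simp: LamR_def split: if_splits)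
  moreover have "(c, b) \<in> E ^^ k" using Suc.IH[of c] c Suc.prems by auto
  ultimately show ?case by (rule relpow_Suc_I2)
qed

lemma acyclic_relpow_n:
  assumes ac: "acyclic E" and sub: "E \<subseteq> {0..<n} \<times> {0..<n}" and ab: "(a, b) \<in> E ^^ n" and a: "a < n"
  shows False
proof -
  obtain f where f: "f 0 = a" "f n = b" "\<And>i. i < n \<Longrightarrow> (f i, f (Suc i)) \<in> E"
    using ab by (auto simp: relpow_fun_conv)
  have n0: "n > 0" using a by simp
  have rng: "f ` {0..n} \<subseteq> {0..<n}"
  proof
    fix y assume "y \<in> f ` {0..n}"
    then obtain i where i: "i \<le> n" "y = f i" by auto
    show "y \<in> {0..<n}"
    proof (cases "i < n")
      case True then show ?thesis using f(3)[OF True] sub i by auto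
    next
      case False
      then have "i = Suc (n - 1)" using i n0 by simp
      then show ?thesis using f(3)[of "n - 1"] sub i n0 by auto
    qed
  qed
  have "\<not> inj_on f {0..n}"
  proof
    assume "inj_on f {0..n}"
    then have "card {0..n} \<le> card {0..<n}" using rng by (intro card_inj_on_le) auto
    then show False by simp
  qed
  then obtain i j where ij: "i \<le> n" "j \<le> n" "i \<noteq> j" "f i = f j"
    unfolding inj_on_def by auto
  have tr: "\<And>d i. i + Suc d \<le> n \<Longrightarrow> (f i, f (i + Suc d)) \<in> E\<^sup>+"
  proof -
    fix d i show "i + Suc d \<le> n \<Longrightarrow> (f i, f (i + Suc d)) \<in> E\<^sup>+"
    proof (induction d)
      case 0 then show ?case using f(3)[of i] by auto
    next
      case (Suc d)
      then have "(f i, f (i + Suc d)) \<in> E\<^sup>+" by simp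
      moreover have "(f (i + Suc d), f (Suc (i + Suc d))) \<in> E" using f(3) Suc.prems by simp
      ultimately show ?case by simp
    qed
  qed
  show False
  proof (cases "i < j")
    case True
    with tr[of i "j - i - 1"] ij have "(f i, f j) \<in> E\<^sup>+" by simp
    then show False using ij ac by (simp add: acyclic_def)
  next
    case False
    with ij have "j < i" by simp
    with tr[of j "i - j - 1"] ij have "(f j, f i) \<in> E\<^sup>+" by simp
    then show False using ij ac by (simp add: acyclic_def)
  qed
qed

lemma lp_nil:
  assumes "is_dag n E"
  shows "lp n (LamR n E x) n = 0\<^sub>m n n"
proof (rule eq_matI)
  have P: "lp n (LamR n E x) n \<in> carrier_mat n n" by (rule lp_carrier) simp
  fix a b assume ab: "a < dim_row (0\<^sub>m n n)" "b < dim_col (0\<^sub>m n n)"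
  show "lp n (LamR n E x) n $$ (a, b) = 0\<^sub>m n n $$ (a, b)"
  proof (rule ccontr)
    assume "lp n (LamR n E x) n $$ (a, b) \<noteq> 0\<^sub>m n n $$ (a, b)"
    then have "(a, b) \<in> E ^^ n" using ab by (intro lp_entries) auto
    then show False using assms ab acyclic_relpow_n unfolding is_dag_def by auto
  qed
qed (use lp_carrier[OF LamR_carrier, of n E x n] in auto)


lemma map_LamS: "map_mat (\<lambda>p. peval p x) (LamS n E) = LamR n E x"
  by (rule eq_matI) (auto simp: LamS_def LamR_def)

lemma map_OmS: "map_mat (\<lambda>p. peval p x) (OmS n) = OmR n x"
  by (rule eq_matI) (auto simp: OmS_def OmR_def)

lemma map_mat_add: "A \<in> carrier_mat n m \<Longrightarrow> B \<in> carrier_mat n m \<Longrightarrow>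
  map_mat (\<lambda>p. peval p x) (A + B) = map_mat (\<lambda>p. peval p x) A + map_mat (\<lambda>p. peval p x) B"
  by (rule eq_matI) (auto simp: peval_add)

lemma map_neumann:
  assumes A: "A \<in> carrier_mat n n"
  shows "map_mat (\<lambda>p. peval p x) (neumann n A k) = nR n (map_mat (\<lambda>p. peval p x) A) k"
proof (induction k)
  case 0 then show ?case by (rule eq_matI) auto
next
  case (Suc k)
  have N: "neumann n A k \<in> carrier_mat n n" by (rule neumann_carrier[OF A])
  show ?case
    using Suc A N by (simp add: map_mat_add[of _ n n] pe.mat_hom_mult[of _ n n _ n] pe.mat_hom_one)
qed

lemma LamS_carrier[simp]: "LamS n E \<in> carrier_mat n n"
  by (simp add: LamS_def)

lemma inverse_is_nR:
  assumes "is_dag n E"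
  shows "the (mat_inverse (1\<^sub>m n - LamR n E x)) = nR n (LamR n E x) n"
proof -
  let ?L = "LamR n E x"
  let ?A = "1\<^sub>m n - ?L"
  let ?B = "nR n ?L n"
  have A: "?A \<in> carrier_mat n n" using LamR_carrier[of n E x] by (intro minus_carrier_mat) auto
  have B: "?B \<in> carrier_mat n n" by (rule nR_carrier) simp
  have AB: "?A * ?B = 1\<^sub>m n"
    using nR_key[OF LamR_carrier, of n E x n] lp_nil[OF assms, of x]
    by (auto intro!: eq_matI)
  have BA: "?B * ?A = 1\<^sub>m n" by (rule mat_mult_left_right_inverse[OF A B AB])
  show ?thesis
  proof (cases "mat_inverse ?A")
    case None
    have "?A \<in> Units (ring_mat TYPE(real) n ())"
      using A B AB BA by (auto simp: Units_def ring_mat_def)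
    moreover have "?A \<notin> Units (ring_mat TYPE(real) n ())" by (rule mat_inverse(1)[OF A None])
    ultimately show ?thesis by blast
  next
    case (Some C)
    from mat_inverse(2)[OF A Some] have C: "?A * C = 1\<^sub>m n" "C * ?A = 1\<^sub>m n" "C \<in> carrier_mat n n"
      by auto
    have "C = C * (?A * ?B)" using AB C by simp
    also have "\<dots> = (C * ?A) * ?B" by (rule assoc_mult_mat[symmetric, OF C(3) A B])
    also have "\<dots> = ?B" using C B by simp
    finally show ?thesis using Some by simp
  qed
qed

lemma map_SigmaS:
  assumes "is_dag n E"
  shows "map_mat (\<lambda>p. peval p x) (SigmaS n E) = phiR n E x"
proof -
  let ?h = "\<lambda>p. peval p x"
  let ?N = "neumann n (LamS n E) n"
  have N: "?N \<in> carrier_mat n n" by (rule neumann_carrier) simp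
  have O: "OmS n \<in> carrier_mat n n" by (simp add: OmS_def)
  have "map_mat ?h (SigmaS n E) = map_mat ?h (transpose_mat ?N) * map_mat ?h (OmS n) * map_mat ?h ?N"
    unfolding SigmaS_def Let_def
    using N O by (simp add: pe.mat_hom_mult[of _ n n _ n])
  also have "\<dots> = phiR n E x"
    unfolding phiR_def Let_def inverse_is_nR[OF assms]
    by (simp add: map_mat_transpose[symmetric] map_neumann map_LamS map_OmS)
  finally show ?thesis .
qed

lemma map_submatrix:
  "map_mat h (submatrix A I J) = submatrix (map_mat h A) I J"
  by (rule eq_matI) (auto simp: submatrix_def dim_submatrix pick_le)

lemma peval_pullback:
  assumes "is_dag n E"
  shows "peval (pullback_det n E i j K) x = det (submatrix (phiR n E x) ({i} \<union> K) ({j} \<union> K))"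
  unfolding pullback_det_def pe.hom_det[symmetric] map_submatrix map_SigmaS[OF assms] ..


lemma inv_props:
  assumes "is_dag n E"
  shows "(1\<^sub>m n - LamR n E x) * nR n (LamR n E x) n = 1\<^sub>m n"
        "nR n (LamR n E x) n * (1\<^sub>m n - LamR n E x) = 1\<^sub>m n"
proof -
  let ?L = "LamR n E x"
  let ?A = "1\<^sub>m n - ?L"
  let ?B = "nR n ?L n"
  have A: "?A \<in> carrier_mat n n" using LamR_carrier[of n E x] by (intro minus_carrier_mat) auto
  have B: "?B \<in> carrier_mat n n" by (rule nR_carrier) simp
  show AB: "?A * ?B = 1\<^sub>m n"
    using nR_key[OF LamR_carrier, of n E x n] lp_nil[OF assms, of x]
    by (auto intro!: eq_matI)
  show "?B * ?A = 1\<^sub>m n" by (rule mat_mult_left_right_inverse[OF A B AB])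
qed

lemma pd_pos:
  assumes dag: "is_dag n E" and pd: "pd_mat n (phiR n E x)" and a: "a < n"
  shows "x (Om a) > 0"
proof -
  let ?L = "LamR n E x"
  let ?A = "1\<^sub>m n - ?L"
  let ?B = "nR n ?L n"
  let ?O = "OmR n x"
  have A: "?A \<in> carrier_mat n n" using LamR_carrier[of n E x] by (intro minus_carrier_mat) auto
  have B: "?B \<in> carrier_mat n n" by (rule nR_carrier) simp
  have O: "?O \<in> carrier_mat n n" by (simp add: OmR_def)
  have phi: "phiR n E x = transpose_mat ?B * ?O * ?B"
    unfolding phiR_def Let_def inverse_is_nR[OF dag] ..
  define e :: "real vec" where "e = unit_vec n a"
  define v where "v = ?A *\<^sub>v e"
  have e: "e \<in> carrier_vec n" by (simp add: e_def)
  have v: "v \<in> carrier_vec n" using A e by (simp add: v_def)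
  have Bv: "?B *\<^sub>v v = e"
    unfolding v_def using A B e inv_props(2)[OF dag, of x]
    by (simp add: assoc_mult_mat_vec[symmetric, of _ n n _ n])
  have v0: "v \<noteq> 0\<^sub>v n"
  proof
    assume "v = 0\<^sub>v n"
    then have "e = 0\<^sub>v n" using Bv B by auto
    then show False using a by (simp add: e_def)
  qed
  have w: "?O *\<^sub>v e \<in> carrier_vec n" using O e by simp
  have "phiR n E x *\<^sub>v v = transpose_mat ?B *\<^sub>v (?O *\<^sub>v e)"
  proof -
    have BT: "transpose_mat ?B \<in> carrier_mat n n" using B by simp
    have "(transpose_mat ?B * ?O * ?B) *\<^sub>v v = (transpose_mat ?B * ?O) *\<^sub>v (?B *\<^sub>v v)"
      by (rule assoc_mult_mat_vec[OF mult_carrier_mat[OF BT O] B v])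
    also have "\<dots> = transpose_mat ?B *\<^sub>v (?O *\<^sub>v e)"
      unfolding Bv by (rule assoc_mult_mat_vec[OF BT O e])
    finally show ?thesis unfolding phi .
  qed
  then have "v \<bullet> (phiR n E x *\<^sub>v v) = (transpose_mat ?B *\<^sub>v (?O *\<^sub>v e)) \<bullet> v"
    using v B w by (simp add: comm_scalar_prod[of _ n])
  also have "\<dots> = (?O *\<^sub>v e) \<bullet> (?B *\<^sub>v v)"
    by (rule transpose_vec_mult_scalar[OF B v w])
  also have "\<dots> = x (Om a)"
    unfolding Bv using a O by (simp add: e_def OmR_def)
  finally show ?thesis using pd v v0 unfolding pd_mat_def by auto
qed


theorem theorem3p4:
  fixes n i j :: nat and E :: "(nat \<times> nat) set" and K :: "nat set" and fs :: "rpoly list"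
  assumes "is_dag n E"
    and "i < n" and "j < n" and "i \<noteq> j"
    and "K \<subseteq> {0..<n} - {i, j}"
    and "\<not> d_separates E K i j"
    and "\<forall>f\<in>set fs. irreducible_in (param_ring n E) f"
    and "pullback_det n E i j K = prod_list fs"
  shows "model n E \<inter> ci_model n i j K =
         (\<Union>f\<in>set fs. phiR n E ` {x. peval f x = 0}) \<inter> {S. pd_mat n S}"
proof -
  have key: "det (submatrix (phiR n E x) ({i} \<union> K) ({j} \<union> K)) = prod_list (map (\<lambda>f. peval f x) fs)" for x
  proof -
    have "det (submatrix (phiR n E x) ({i} \<union> K) ({j} \<union> K)) = peval (pullback_det n E i j K) x"
      by (rule peval_pullback[OF assms(1), symmetric])
    also have "\<dots> = peval (prod_list fs) x" by (simp only: assms(8))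
    also have "\<dots> = prod_list (map (\<lambda>f. peval f x) fs)" by (rule pe.hom_prod_list)
    finally show ?thesis .
  qed
  show ?thesis
  proof (intro equalityI subsetI)
    fix S assume "S \<in> model n E \<inter> ci_model n i j K"
    then obtain x where x: "S = phiR n E x" and pd: "pd_mat n S"
      and d: "det (submatrix S ({i} \<union> K) ({j} \<union> K)) = 0"
      by (auto simp: model_def ci_model_def)
    then have "prod_list (map (\<lambda>f. peval f x) fs) = 0" using key[of x] d x by metis
    then obtain f where "f \<in> set fs" "peval f x = 0"
      by (auto simp: prod_list_zero_iff simp del: pe.prod_list_map_hom)
    then show "S \<in> (\<Union>f\<in>set fs. phiR n E ` {x. peval f x = 0}) \<inter> {S. pd_mat n S}"
      using x pd by auto
  next
    fix S assume "S \<in> (\<Union>f\<in>set fs. phiR n E ` {x. peval f x = 0}) \<inter> {S. pd_mat n S}"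
    then obtain f x where f: "f \<in> set fs" "peval f x = 0" and x: "S = phiR n E x" and pd: "pd_mat n S"
      by auto
    have "x \<in> {x. \<forall>a<n. x (Om a) > 0}" using pd_pos[OF assms(1)] pd x by auto
    then have "S \<in> model n E" unfolding model_def using x by auto
    moreover have "prod_list (map (\<lambda>f. peval f x) fs) = 0"
      using f by (auto simp: prod_list_zero_iff simp del: pe.prod_list_map_hom)
    then have "det (submatrix S ({i} \<union> K) ({j} \<union> K)) = 0" using key[of x] x by metis
    ultimately show "S \<in> model n E \<inter> ci_model n i j K" using pd by (auto simp: ci_model_def)
  qed
qed

end
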